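(* Assume that for every predictable stopping time $\sigma$, $\mathbb P(\{\sigma<\infty\}\cap\{X_{\sigma-}<b(\sigma)\le X_\sigma\})=0$. Then $\tau_G$ is a totally inaccessible stopping time, i.e. $\tau_G$ is a stopping time and $\mathbb P(\tau_G=\sigma<\infty)=0$ for every predictable stopping time $\sigma$. In particular this holds whenever $X$ has no jumps at predictable times, i.e. $\mathbb P(\Delta X_\sigma\neq0,\ \sigma<\infty)=0$ for every predictable stopping time $\sigma$.
   Context: Let $(\Omega,\mathcal F,\mathbb F=(\mathcal F_t)_{t\ge0},\mathbb P)$ be a filtered probability space satisfying the usual conditions. Let $X$ be a càdlàg $\mathbb F$-adapted real-valued process and $b:[0,\infty)\to\mathbb R$ a continuous deterministic function, with $X_0<b(0)$ identically. For $t>0$, $X_{t-}:=\lim_{s\uparrow t}X_s$ and $\Delta X_t:=X_t-X_{t-}$. Set $Y_t:=X_t-b(t)$, $\tau:=\inf\{t\ge0: Y_t\ge 0\}$ (with $\inf\emptyset=\infty$), $G:=\{\tau<\infty,\,Y_{\tau-}<0\}$, and define $\tau_G:=\tau$ on $G$ and $\tau_G:=\infty$ on $\Omega\setminus G$. *)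

theory Defs
  imports "HOL-Probability.Probability"
begin

definition filtration_on :: "'a measure \<Rightarrow> (real \<Rightarrow> 'a set set) \<Rightarrow> bool" where
  "filtration_on M F \<longleftrightarrow>
     (\<forall>t\<ge>0. sigma_algebra (space M) (F t) \<and> F t \<subseteq> sets M) \<and>
     (\<forall>s t. 0 \<le> s \<longrightarrow> s \<le> t \<longrightarrow> F s \<subseteq> F t)"

definition usual_conditions :: "'a measure \<Rightarrow> (real \<Rightarrow> 'a set set) \<Rightarrow> bool" where
  "usual_conditions M F \<longleftrightarrow>
     filtration_on M F \<and>
     (\<forall>t\<ge>0. F t = (\<Inter>s\<in>{t<..}. F s)) \<and>
     (\<forall>N\<in>null_sets M. \<forall>A. A \<subseteq> N \<longrightarrow> A \<in> F 0)"

definition adapted :: "'a measure \<Rightarrow> (real \<Rightarrow> 'a set set) \<Rightarrow> (real \<Rightarrow> 'a \<Rightarrow> real) \<Rightarrow> bool" where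
  "adapted M F X \<longleftrightarrow>
     (\<forall>t\<ge>0. \<forall>B\<in>sets borel. {\<omega>\<in>space M. X t \<omega> \<in> B} \<in> F t)"

definition cadlag_paths :: "'a measure \<Rightarrow> (real \<Rightarrow> 'a \<Rightarrow> real) \<Rightarrow> bool" where
  "cadlag_paths M X \<longleftrightarrow>
     (\<forall>\<omega>\<in>space M. (\<forall>t\<ge>0. ((\<lambda>s. X s \<omega>) \<longlongrightarrow> X t \<omega>) (at_right t)) \<and>
                   (\<forall>t>0. \<exists>l. ((\<lambda>s. X s \<omega>) \<longlongrightarrow> l) (at_left t)))"

text \<open>Left limit X_{t-}; convention X_{0-} = X_0.\<close>
definition left_lim :: "(real \<Rightarrow> 'a \<Rightarrow> real) \<Rightarrow> real \<Rightarrow> 'a \<Rightarrow> real" where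
  "left_lim X t \<omega> = (if t \<le> 0 then X 0 \<omega> else Lim (at_left t) (\<lambda>s. X s \<omega>))"

definition stopping_time_on :: "'a measure \<Rightarrow> (real \<Rightarrow> 'a set set) \<Rightarrow> ('a \<Rightarrow> ennreal) \<Rightarrow> bool" where
  "stopping_time_on M F T \<longleftrightarrow> (\<forall>t\<ge>0. {\<omega>\<in>space M. T \<omega> \<le> ennreal t} \<in> F t)"

definition predictable_sets :: "'a measure \<Rightarrow> (real \<Rightarrow> 'a set set) \<Rightarrow> (real \<times> 'a) set set" where
  "predictable_sets M F = sigma_sets ({0..} \<times> space M)
     ({{0} \<times> A | A. A \<in> F 0} \<union> {{s<..t} \<times> A | s t A. 0 \<le> s \<and> s \<le> t \<and> A \<in> F s})"

definition predictable_time :: "'a measure \<Rightarrow> (real \<Rightarrow> 'a set set) \<Rightarrow> ('a \<Rightarrow> ennreal) \<Rightarrow> bool" where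
  "predictable_time M F \<sigma> \<longleftrightarrow> stopping_time_on M F \<sigma> \<and>
     {(t, \<omega>). 0 \<le> t \<and> \<omega> \<in> space M \<and> \<sigma> \<omega> \<le> ennreal t} \<in> predictable_sets M F"

definition totally_inaccessible :: "'a measure \<Rightarrow> (real \<Rightarrow> 'a set set) \<Rightarrow> ('a \<Rightarrow> ennreal) \<Rightarrow> bool" where
  "totally_inaccessible M F T \<longleftrightarrow> stopping_time_on M F T \<and>
     (\<forall>\<sigma>. predictable_time M F \<sigma> \<longrightarrow>
        {\<omega>\<in>space M. T \<omega> = \<sigma> \<omega> \<and> \<sigma> \<omega> < \<infinity>} \<in> null_sets M)"

text \<open>First hitting time of [0,\<infinity>) by Y (inf of the empty set is \<infinity>).\<close>
definition hitting_time :: "(real \<Rightarrow> 'a \<Rightarrow> real) \<Rightarrow> 'a \<Rightarrow> ennreal" where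
  "hitting_time Y \<omega> = Inf (ennreal ` {t. 0 \<le> t \<and> 0 \<le> Y t \<omega>})"

end

theory Submission
  imports Defs
begin

locale hitset =
  fixes M :: "'a measure" and F :: "real \<Rightarrow> 'a set set"
    and X :: "real \<Rightarrow> 'a \<Rightarrow> real" and b :: "real \<Rightarrow> real"
    and Y :: "real \<Rightarrow> 'a \<Rightarrow> real" and \<tau> :: "'a \<Rightarrow> ennreal"
  assumes P: "prob_space M"
    and UC: "usual_conditions M F"
    and CL: "cadlag_paths M X" and AD: "adapted M F X"
    and BC: "continuous_on {0..} b"
    and X0: "\<forall>\<omega>\<in>space M. X 0 \<omega> < b 0"
    and Y_def: "Y = (\<lambda>t \<omega>. X t \<omega> - b t)"
    and tau_def: "\<tau> = hitting_time Y"
begin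

lemma filt: "filtration_on M F" using UC unfolding usual_conditions_def by (rule conjunct1)

lemma filt1: "\<forall>t\<ge>0. sigma_algebra (space M) (F t) \<and> F t \<subseteq> sets M"
  using filt unfolding filtration_on_def by (rule conjunct1)

lemma filt2: "\<forall>s t. 0 \<le> s \<longrightarrow> s \<le> t \<longrightarrow> F s \<subseteq> F t"
  using filt unfolding filtration_on_def by (rule conjunct2)

lemma F_sa: "0 \<le> t \<Longrightarrow> sigma_algebra (space M) (F t)"
  using filt1 by simp

lemma F_sub: "0 \<le> t \<Longrightarrow> F t \<subseteq> sets M"
  using filt1 by simp

lemma F_mono: "0 \<le> s \<Longrightarrow> s \<le> t \<Longrightarrow> F s \<subseteq> F t"
  using filt2 by simp

lemma F_rc: "0 \<le> t \<Longrightarrow> F t = (\<Inter>s\<in>{t<..}. F s)"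
proof -
  have "\<forall>t\<ge>0. F t = (\<Inter>s\<in>{t<..}. F s)" using UC unfolding usual_conditions_def by (elim conjE) assumption
  then show "0 \<le> t \<Longrightarrow> F t = (\<Inter>s\<in>{t<..}. F s)" by simp
qed

lemma F_compl:
  assumes "N \<in> null_sets M" "A \<subseteq> N" "0 \<le> t" shows "A \<in> F t"
proof -
  have "\<forall>N\<in>null_sets M. \<forall>A. A \<subseteq> N \<longrightarrow> A \<in> F 0" using UC unfolding usual_conditions_def by (elim conjE) assumption
  then have "A \<in> F 0" using assms(1,2) by blast
  then show ?thesis using F_mono[of 0 t] assms(3) by blast
qed

lemma F_space: "0 \<le> t \<Longrightarrow> space M \<in> F t"
proof -
  assume t: "0 \<le> t"
  interpret sigma_algebra "space M" "F t" using F_sa[OF t] .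
  show ?thesis by (rule top)
qed

lemma Y_le: "0 \<le> t \<Longrightarrow> {\<omega>\<in>space M. Y t \<omega> \<le> c} \<in> F t"
proof -
  assume t: "0 \<le> t"
  have B: "{..c + b t} \<in> sets borel" by simp
  have "\<forall>t\<ge>0. \<forall>B\<in>sets borel. {\<omega>\<in>space M. X t \<omega> \<in> B} \<in> F t" using AD unfolding adapted_def .
  then have "{\<omega>\<in>space M. X t \<omega> \<in> {..c + b t}} \<in> F t" using t B by blast
  moreover have "{\<omega>\<in>space M. Y t \<omega> \<le> c} = {\<omega>\<in>space M. X t \<omega> \<in> {..c + b t}}"
    by (auto simp: Y_def)
  ultimately show ?thesis by simp
qed

lemma Y_gr: "0 \<le> t \<Longrightarrow> {\<omega>\<in>space M. c < Y t \<omega>} \<in> F t"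
proof -
  assume t: "0 \<le> t"
  have B: "{c + b t<..} \<in> sets borel" by simp
  have "\<forall>t\<ge>0. \<forall>B\<in>sets borel. {\<omega>\<in>space M. X t \<omega> \<in> B} \<in> F t" using AD unfolding adapted_def .
  then have "{\<omega>\<in>space M. X t \<omega> \<in> {c + b t<..}} \<in> F t" using t B by blast
  moreover have "{\<omega>\<in>space M. c < Y t \<omega>} = {\<omega>\<in>space M. X t \<omega> \<in> {c + b t<..}}"
    by (auto simp: Y_def)
  ultimately show ?thesis by simp
qed

lemma Y_rc: "\<omega> \<in> space M \<Longrightarrow> 0 \<le> t \<Longrightarrow> ((\<lambda>s. Y s \<omega>) \<longlongrightarrow> Y t \<omega>) (at_right t)"
proof -
  assume w: "\<omega> \<in> space M" and t: "0 \<le> t"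
  have x: "((\<lambda>s. X s \<omega>) \<longlongrightarrow> X t \<omega>) (at_right t)" using CL w t unfolding cadlag_paths_def by blast
  have "(b \<longlongrightarrow> b t) (at t within {0..})" using BC t unfolding continuous_on_def by auto
  then have "(b \<longlongrightarrow> b t) (at_right t)" by (rule tendsto_within_subset) (use t in auto)
  with x show ?thesis unfolding Y_def by (intro tendsto_diff)
qed

lemma b_left: "0 < t \<Longrightarrow> (b \<longlongrightarrow> b t) (at_left t)"
proof -
  assume t: "0 < t"
  have "continuous_on {0<..} b" using BC by (rule continuous_on_subset) auto
  then have "isCont b t" using t by (simp add: continuous_on_eq_continuous_at)
  then have "(b \<longlongrightarrow> b t) (at t)" by (simp add: isCont_def)
  then show ?thesis by (rule tendsto_mono[rotated]) (simp add: at_le)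
qed

lemma Y_ll: "\<omega> \<in> space M \<Longrightarrow> 0 < t \<Longrightarrow>
   ((\<lambda>s. Y s \<omega>) \<longlongrightarrow> left_lim Y t \<omega>) (at_left t) \<and> left_lim Y t \<omega> = left_lim X t \<omega> - b t"
proof -
  assume w: "\<omega> \<in> space M" and t: "0 < t"
  obtain l where l: "((\<lambda>s. X s \<omega>) \<longlongrightarrow> l) (at_left t)" using CL w t unfolding cadlag_paths_def by blast
  have y: "((\<lambda>s. Y s \<omega>) \<longlongrightarrow> l - b t) (at_left t)" unfolding Y_def using l b_left[OF t] by (intro tendsto_diff)
  have lx: "left_lim X t \<omega> = l" using t l by (simp add: left_lim_def tendsto_Lim)
  have ly: "left_lim Y t \<omega> = l - b t" using t y by (simp add: left_lim_def tendsto_Lim)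
  show ?thesis using y lx ly by simp
qed

lemma tau_eq: "\<tau> \<omega> = Inf (ennreal ` {t. 0 \<le> t \<and> 0 \<le> Y t \<omega>})"
  by (simp add: tau_def hitting_time_def)

lemma tau_lower: "0 \<le> v \<Longrightarrow> 0 \<le> Y v \<omega> \<Longrightarrow> \<tau> \<omega> \<le> ennreal v"
  unfolding tau_eq by (rule Inf_lower) auto

lemma tau_before:
  assumes v: "0 \<le> v" and lt: "ennreal v < \<tau> \<omega>" shows "Y v \<omega> < 0"
proof (rule ccontr)
  assume "\<not> Y v \<omega> < 0"
  then have "0 \<le> Y v \<omega>" by simp
  then have "\<tau> \<omega> \<le> ennreal v" using tau_lower v by blast
  then show False using lt leD by blast
qed

lemma tau_hit:
  assumes w: "\<omega> \<in> space M" and fin: "\<tau> \<omega> < \<infinity>"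
  shows "0 \<le> Y (enn2real (\<tau> \<omega>)) \<omega> \<and> 0 < enn2real (\<tau> \<omega>)"
proof -
  define r where "r = enn2real (\<tau> \<omega>)"
  have r0: "0 \<le> r" by (simp add: r_def)
  have tr: "\<tau> \<omega> = ennreal r" using fin by (simp add: r_def)
  have hit: "0 \<le> Y r \<omega>"
  proof (rule ccontr)
    assume "\<not> 0 \<le> Y r \<omega>"
    then have "Y r \<omega> < 0" by simp
    then have "eventually (\<lambda>s. Y s \<omega> < 0) (at_right r)"
      using order_tendstoD(2)[OF Y_rc[OF w r0]] by blast
    then obtain c where c: "c > r" "\<And>y. y > r \<Longrightarrow> y < c \<Longrightarrow> Y y \<omega> < 0"
      by (auto simp: eventually_at_right_field)
    have "ennreal c \<le> \<tau> \<omega>" unfolding tau_eq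
    proof (rule Inf_greatest)
      fix x assume "x \<in> ennreal ` {t. 0 \<le> t \<and> 0 \<le> Y t \<omega>}"
      then obtain v where v: "x = ennreal v" "0 \<le> v" "0 \<le> Y v \<omega>" by auto
      have "\<tau> \<omega> \<le> ennreal v" using tau_lower v by simp
      then have "r \<le> v" using tr v by simp
      moreover have "v \<noteq> r" using v \<open>Y r \<omega> < 0\<close> by auto
      ultimately have "r < v" by simp
      have "c \<le> v"
      proof (rule ccontr)
        assume "\<not> c \<le> v"
        then have "v < c" by simp
        then have "Y v \<omega> < 0" using c(2) \<open>r < v\<close> by blast
        then show False using v by simp
      qed
      then show "ennreal c \<le> x" using v by (simp add: ennreal_leI)
    qed
    then have "c \<le> r" using tr r0 c by simp
    then show False using c by simp
  qed
  moreover have "r \<noteq> 0" using hit X0 w by (auto simp: Y_def)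
  ultimately have "0 \<le> Y r \<omega> \<and> 0 < r" using r0 by simp
  then show ?thesis by (simp add: r_def)
qed

end

definition Gf :: "ennreal \<Rightarrow> ennreal" where
  "Gf x = (if x = \<top> then 2 else ennreal (arctan (enn2real x)))"

lemma Gf_meas: "Gf \<in> borel_measurable borel"
  unfolding Gf_def by measurable

lemma Gf_le2: "Gf x \<le> 2"
proof -
  have "arctan (enn2real x) < 2" using arctan_ubound[of "enn2real x"] pi_less_4 by linarith
  then have "ennreal (arctan (enn2real x)) \<le> ennreal 2" by (intro ennreal_leI) simp
  then show ?thesis by (simp add: Gf_def)
qed

lemma Gf_strict: "x < y \<Longrightarrow> Gf x < Gf y"
proof -
  assume xy: "x < y"
  then have xt: "x \<noteq> \<top>" by auto
  show ?thesis
  proof (cases "y = \<top>")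
    case True
    have "arctan (enn2real x) < 2" using arctan_ubound[of "enn2real x"] pi_less_4 by linarith
    then have "ennreal (arctan (enn2real x)) < ennreal 2" by (intro ennreal_lessI) auto
    then show ?thesis using True xt by (simp add: Gf_def)
  next
    case False
    have e1: "ennreal (enn2real x) = x" using xt by (simp add: less_top)
    have e2: "ennreal (enn2real y) = y" using False by (simp add: less_top)
    have "ennreal (enn2real x) < ennreal (enn2real y)" using xy e1 e2 by simp
    then have "enn2real x < enn2real y" by (simp add: ennreal_less_iff)
    moreover have "0 \<le> enn2real x" by simp
    ultimately have "0 < enn2real y" by linarith
    then have "ennreal (arctan (enn2real x)) < ennreal (arctan (enn2real y))"
      using \<open>enn2real x < enn2real y\<close> by (intro ennreal_lessI) (auto simp: arctan_less_iff)
    then show ?thesis using False xt by (simp add: Gf_def)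
  qed
qed

lemma Gf_mono: "x \<le> y \<Longrightarrow> Gf x \<le> Gf y"
proof (cases "x = y")
  case True
  then show ?thesis by simp
next
  case False
  assume "x \<le> y"
  with False have "x < y" by (simp add: order_le_less)
  then show ?thesis by (intro less_imp_le Gf_strict)
qed

context hitset
begin

lemma stop_from_strict:
  assumes t: "0 \<le> t" and H: "\<And>u. t < u \<Longrightarrow> {\<omega>\<in>space M. \<rho> \<omega> < ennreal u} \<in> F u"
  shows "{\<omega>\<in>space M. \<rho> \<omega> \<le> ennreal t} \<in> F t"
proof -
  have "{\<omega>\<in>space M. \<rho> \<omega> \<le> ennreal t} \<in> F s" if s: "t < s" for s
  proof -
    interpret sigma_algebra "space M" "F s" using F_sa[of s] s t by simp
    define u where "u k = t + (s - t) / real (Suc k)" for k :: nat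
    have u1: "t < u k" for k using s by (simp add: u_def)
    have u2: "u k \<le> s" for k
    proof -
      have "(s - t) / real (Suc k) \<le> (s - t) / 1" using s by (intro divide_left_mono) auto
      then show ?thesis by (simp add: u_def)
    qed
    have eq: "{\<omega>\<in>space M. \<rho> \<omega> \<le> ennreal t} = (\<Inter>k. {\<omega>\<in>space M. \<rho> \<omega> < ennreal (u k)})"
    proof (intro equalityI subsetI)
      fix \<omega> assume "\<omega> \<in> {\<omega>\<in>space M. \<rho> \<omega> \<le> ennreal t}"
      moreover have "ennreal t < ennreal (u k)" for k using u1[of k] t by (simp add: ennreal_less_iff)
      ultimately show "\<omega> \<in> (\<Inter>k. {\<omega>\<in>space M. \<rho> \<omega> < ennreal (u k)})"
        by (auto intro: le_less_trans)
    next
      fix \<omega> assume w: "\<omega> \<in> (\<Inter>k. {\<omega>\<in>space M. \<rho> \<omega> < ennreal (u k)})"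
      then have w1: "\<omega> \<in> space M" and w2: "\<And>k. \<rho> \<omega> < ennreal (u k)" by auto
      have "\<rho> \<omega> \<le> ennreal t"
      proof (rule ccontr)
        assume "\<not> \<rho> \<omega> \<le> ennreal t"
        then have lt: "ennreal t < \<rho> \<omega>" by simp
        have fin: "\<rho> \<omega> < \<top>" using w2[of 0] by (meson ennreal_less_top less_trans)
        define r where "r = enn2real (\<rho> \<omega>)"
        have rr: "\<rho> \<omega> = ennreal r" using fin by (simp add: r_def)
        have r0: "0 \<le> r" by (simp add: r_def)
        have tr: "t < r" using lt rr t by (simp add: ennreal_less_iff)
        have pos: "0 < (r - t) / (s - t)" using tr s by simp
        obtain k where k: "inverse (real (Suc k)) < (r - t) / (s - t)"
          using reals_Archimedean[OF pos] by blast
        have "(s - t) * inverse (real (Suc k)) < (s - t) * ((r - t) / (s - t))"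
          using k s by (intro mult_strict_left_mono) auto
        moreover have "(s - t) * ((r - t) / (s - t)) = r - t" using s by simp
        ultimately have "(s - t) * inverse (real (Suc k)) < r - t" by (rule ord_less_eq_trans)
        then have "(s - t) / real (Suc k) < r - t" by (simp only: divide_inverse)
        then have "u k < r" by (simp add: u_def)
        moreover have "r < u k" using w2[of k] rr r0 by (simp add: ennreal_less_iff)
        ultimately show False by simp
      qed
      then show "\<omega> \<in> {\<omega>\<in>space M. \<rho> \<omega> \<le> ennreal t}" using w1 by simp
    qed
    have "(\<Inter>k. {\<omega>\<in>space M. \<rho> \<omega> < ennreal (u k)}) \<in> F s"
    proof (rule countable_INT)
      show "range (\<lambda>k. {\<omega>\<in>space M. \<rho> \<omega> < ennreal (u k)}) \<subseteq> F s"
      proof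
        fix A assume "A \<in> range (\<lambda>k. {\<omega>\<in>space M. \<rho> \<omega> < ennreal (u k)})"
        then obtain k where A: "A = {\<omega>\<in>space M. \<rho> \<omega> < ennreal (u k)}" by auto
        have "A \<in> F (u k)" using H[OF u1[of k]] A by simp
        moreover have "F (u k) \<subseteq> F s" using F_mono[of "u k" s] u1[of k] u2[of k] t by simp
        ultimately show "A \<in> F s" by auto
      qed
    qed auto
    then show ?thesis using eq by simp
  qed
  then have "{\<omega>\<in>space M. \<rho> \<omega> \<le> ennreal t} \<in> (\<Inter>s\<in>{t<..}. F s)" by auto
  then show ?thesis using F_rc[OF t] by simp
qed

lemma stop_meas:
  assumes "stopping_time_on M F \<rho>" shows "\<rho> \<in> borel_measurable M"
proof (rule borel_measurableI_le)
  fix y :: ennreal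
  show "{x\<in>space M. \<rho> x \<le> y} \<in> sets M"
  proof (cases "y = \<top>")
    case True then show ?thesis by simp
  next
    case False
    then have y: "y = ennreal (enn2real y)" by (simp add: less_top)
    have "{x\<in>space M. \<rho> x \<le> ennreal (enn2real y)} \<in> F (enn2real y)"
      using assms unfolding stopping_time_on_def by simp
    then have "{x\<in>space M. \<rho> x \<le> ennreal (enn2real y)} \<in> sets M"
      using F_sub[of "enn2real y"] by auto
    then show ?thesis using y by metis
  qed
qed

definition nxt :: "('a \<Rightarrow> ennreal) \<Rightarrow> nat \<Rightarrow> 'a \<Rightarrow> ennreal" where
  "nxt \<rho> n \<omega> = Inf (ennreal ` {v. 0 \<le> v \<and> \<rho> \<omega> \<le> ennreal v \<and> - inverse (real (Suc n)) < Y v \<omega>})"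

lemma nxt_stop:
  assumes st: "stopping_time_on M F \<rho>"
  shows "stopping_time_on M F (nxt \<rho> n)"
  unfolding stopping_time_on_def
proof (intro allI impI)
  fix t :: real assume t: "0 \<le> t"
  show "{\<omega>\<in>space M. nxt \<rho> n \<omega> \<le> ennreal t} \<in> F t"
  proof (rule stop_from_strict[OF t])
    fix u assume tu: "t < u"
    then have u0: "0 \<le> u" using t by simp
    let ?c = "- inverse (real (Suc n))"
    have eq: "{\<omega>\<in>space M. nxt \<rho> n \<omega> < ennreal u} =
      (\<Union>q\<in>{q\<in>\<rat>. 0 \<le> q \<and> q < u}. {\<omega>\<in>space M. \<rho> \<omega> \<le> ennreal q} \<inter> {\<omega>\<in>space M. ?c < Y q \<omega>})"
    proof (intro equalityI subsetI)
      fix \<omega> assume "\<omega> \<in> {\<omega>\<in>space M. nxt \<rho> n \<omega> < ennreal u}"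
      then have w: "\<omega> \<in> space M" and lt: "nxt \<rho> n \<omega> < ennreal u" by auto
      let ?V = "{v. 0 \<le> v \<and> \<rho> \<omega> \<le> ennreal v \<and> ?c < Y v \<omega>}"
      from lt have "\<exists>x\<in>ennreal ` ?V. x < ennreal u" unfolding nxt_def by (simp only: Inf_less_iff)
      then obtain v where vV: "v \<in> ?V" and v4: "ennreal v < ennreal u" by blast
      from vV have v: "0 \<le> v" "\<rho> \<omega> \<le> ennreal v" "?c < Y v \<omega>" by simp_all
      have vu: "v < u" using v(1) v4 by (simp add: ennreal_less_iff)
      have "eventually (\<lambda>s. ?c < Y s \<omega>) (at_right v)"
        using order_tendstoD(1)[OF Y_rc[OF w v(1)] v(3)] .
      then obtain c where c: "c > v" "\<And>y. y > v \<Longrightarrow> y < c \<Longrightarrow> ?c < Y y \<omega>"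
        by (auto simp: eventually_at_right_field)
      have "v < min c u" using c(1) vu by simp
      then obtain q where q: "q \<in> \<rat>" "v < q" "q < min c u"
        using Rats_dense_in_real by blast
      have "ennreal v \<le> ennreal q" using q(2) by (intro ennreal_leI) simp
      with v(2) have A: "\<rho> \<omega> \<le> ennreal q" by (rule order_trans)
      have B: "?c < Y q \<omega>" using c(2)[of q] q by simp
      have qm: "q \<in> {q\<in>\<rat>. 0 \<le> q \<and> q < u}" using q v(1) by simp
      have "\<omega> \<in> {\<omega>\<in>space M. \<rho> \<omega> \<le> ennreal q} \<inter> {\<omega>\<in>space M. ?c < Y q \<omega>}"
        using A B w by simp
      with qm show "\<omega> \<in> (\<Union>q\<in>{q\<in>\<rat>. 0 \<le> q \<and> q < u}. {\<omega>\<in>space M. \<rho> \<omega> \<le> ennreal q} \<inter> {\<omega>\<in>space M. ?c < Y q \<omega>})"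
        by blast
    next
      fix \<omega> assume "\<omega> \<in> (\<Union>q\<in>{q\<in>\<rat>. 0 \<le> q \<and> q < u}. {\<omega>\<in>space M. \<rho> \<omega> \<le> ennreal q} \<inter> {\<omega>\<in>space M. ?c < Y q \<omega>})"
      then obtain q where q: "q \<in> \<rat>" "0 \<le> q" "q < u" "\<omega> \<in> space M" "\<rho> \<omega> \<le> ennreal q" "?c < Y q \<omega>"
        by blast
      have "q \<in> {v. 0 \<le> v \<and> \<rho> \<omega> \<le> ennreal v \<and> ?c < Y v \<omega>}" using q by simp
      then have "nxt \<rho> n \<omega> \<le> ennreal q" unfolding nxt_def by (intro Inf_lower imageI)
      also have "ennreal q < ennreal u" using q by (simp add: ennreal_less_iff)
      finally show "\<omega> \<in> {\<omega>\<in>space M. nxt \<rho> n \<omega> < ennreal u}" using q by simp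
    qed
    interpret sigma_algebra "space M" "F u" using F_sa[OF u0] .
    have "(\<Union>q\<in>{q\<in>\<rat>. 0 \<le> q \<and> q < u}. {\<omega>\<in>space M. \<rho> \<omega> \<le> ennreal q} \<inter> {\<omega>\<in>space M. ?c < Y q \<omega>}) \<in> F u"
    proof (rule countable_UN'')
      show "countable {q\<in>\<rat>. 0 \<le> q \<and> q < u}" by (intro countable_Collect countable_rat)
      fix q assume q: "q \<in> {q\<in>\<rat>. 0 \<le> q \<and> q < u}"
      have "F q \<subseteq> F u" using q F_mono[of q u] by simp
      moreover have "{\<omega>\<in>space M. \<rho> \<omega> \<le> ennreal q} \<in> F q" using st q unfolding stopping_time_on_def by simp
      moreover have "{\<omega>\<in>space M. ?c < Y q \<omega>} \<in> F q" using Y_gr q by simp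
      ultimately show "{\<omega>\<in>space M. \<rho> \<omega> \<le> ennreal q} \<inter> {\<omega>\<in>space M. ?c < Y q \<omega>} \<in> F u"
        by (intro Int) auto
    qed
    then show "{\<omega>\<in>space M. nxt \<rho> n \<omega> < ennreal u} \<in> F u" using eq by simp
  qed
qed

lemma nxt_ge: "\<rho> \<omega> \<le> nxt \<rho> n \<omega>"
  unfolding nxt_def
proof (rule Inf_greatest)
  fix x assume "x \<in> ennreal ` {v. 0 \<le> v \<and> \<rho> \<omega> \<le> ennreal v \<and> - inverse (real (Suc n)) < Y v \<omega>}"
  then obtain v where "x = ennreal v" "\<rho> \<omega> \<le> ennreal v" by blast
  then show "\<rho> \<omega> \<le> x" by simp
qed

lemma nxt_le_tau:
  assumes w: "\<omega> \<in> space M" and le: "\<rho> \<omega> \<le> \<tau> \<omega>"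
  shows "nxt \<rho> n \<omega> \<le> \<tau> \<omega>"
proof (cases "\<tau> \<omega> = \<top>")
  case True then show ?thesis by simp
next
  case False
  then have fin: "\<tau> \<omega> < \<infinity>" by (simp add: less_top)
  define r where "r = enn2real (\<tau> \<omega>)"
  have rr: "\<tau> \<omega> = ennreal r" using fin by (simp add: r_def)
  have h: "0 \<le> Y r \<omega>" using tau_hit[OF w fin] by (simp add: r_def)
  have "0 < inverse (real (Suc n))" by simp
  then have "- inverse (real (Suc n)) < Y r \<omega>" using h by linarith
  moreover have "0 \<le> r" by (simp add: r_def)
  moreover have "\<rho> \<omega> \<le> ennreal r" using le rr by simp
  ultimately have mem: "r \<in> {v. 0 \<le> v \<and> \<rho> \<omega> \<le> ennreal v \<and> - inverse (real (Suc n)) < Y v \<omega>}"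
    by blast
  have "nxt \<rho> n \<omega> \<le> ennreal r" unfolding nxt_def
    using mem by (intro Inf_lower imageI)
  then show ?thesis using rr by simp
qed

lemma nxt_gt:
  assumes w: "\<omega> \<in> space M" and lt: "\<rho> \<omega> < \<tau> \<omega>"
  shows "\<exists>n. \<rho> \<omega> < nxt \<rho> n \<omega>"
proof -
  have fin: "\<rho> \<omega> < \<top>" using lt top_greatest by (rule less_le_trans)
  define r0 where "r0 = enn2real (\<rho> \<omega>)"
  have rr: "\<rho> \<omega> = ennreal r0" using fin by (simp add: r0_def)
  have r0: "0 \<le> r0" by (simp add: r0_def)
  have neg: "Y r0 \<omega> < 0" using tau_before[OF r0] lt rr by simp
  then have "0 < - Y r0 \<omega>" by simp
  then obtain n where n: "inverse (real (Suc n)) < - Y r0 \<omega>" using reals_Archimedean by blast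
  let ?c = "- inverse (real (Suc n))"
  have "Y r0 \<omega> < ?c" using n by simp
  then have "eventually (\<lambda>s. Y s \<omega> < ?c) (at_right r0)"
    using order_tendstoD(2)[OF Y_rc[OF w r0]] by blast
  then obtain c where c: "c > r0" "\<And>y. y > r0 \<Longrightarrow> y < c \<Longrightarrow> Y y \<omega> < ?c"
    by (auto simp: eventually_at_right_field)
  have c1: "ennreal c \<le> nxt \<rho> n \<omega>" unfolding nxt_def
  proof (rule Inf_greatest)
    fix x assume "x \<in> ennreal ` {v. 0 \<le> v \<and> \<rho> \<omega> \<le> ennreal v \<and> ?c < Y v \<omega>}"
    then obtain v where v: "x = ennreal v" "0 \<le> v" "\<rho> \<omega> \<le> ennreal v" "?c < Y v \<omega>" by auto
    have "r0 \<le> v" using v rr by simp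
    moreover have "v \<noteq> r0" using v \<open>Y r0 \<omega> < ?c\<close> by auto
    ultimately have rv: "r0 < v" by simp
    have "c \<le> v"
    proof (rule ccontr)
      assume "\<not> c \<le> v"
      then have "Y v \<omega> < ?c" using c(2)[of v] rv by simp
      then show False using v by simp
    qed
    then show "ennreal c \<le> x" using v by (simp add: ennreal_leI)
  qed
  have c2: "\<rho> \<omega> < ennreal c" using c(1) r0 rr by (simp add: ennreal_less_iff)
  from c2 c1 have "\<rho> \<omega> < nxt \<rho> n \<omega>" by (rule order_less_le_trans)
  then show ?thesis by blast
qed

end

context hitset
begin

lemma tau_stop: "stopping_time_on M F \<tau>"
proof -
  interpret prob_space M by (rule P)
  define S where "S = {\<rho>. stopping_time_on M F \<rho> \<and> (\<forall>\<omega>\<in>space M. \<rho> \<omega> \<le> \<tau> \<omega>)}"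
  define \<phi> where "\<phi> \<rho> = (\<integral>\<^sup>+\<omega>. Gf (\<rho> \<omega>) \<partial>M)" for \<rho>
  have zero_S: "(\<lambda>_. 0) \<in> S" unfolding S_def stopping_time_on_def using F_space by simp
  have meas: "(\<lambda>\<omega>. Gf (\<rho> \<omega>)) \<in> borel_measurable M" if "stopping_time_on M F \<rho>" for \<rho>
    using measurable_compose[OF stop_meas[OF that] Gf_meas] .
  have phi_fin: "\<phi> \<rho> \<noteq> \<infinity>" for \<rho>
  proof -
    have "\<phi> \<rho> \<le> (\<integral>\<^sup>+\<omega>. 2 \<partial>M)" unfolding \<phi>_def by (intro nn_integral_mono) (simp add: Gf_le2)
    also have "\<dots> = 2" by (simp add: emeasure_space_1)
    finally have "\<phi> \<rho> \<le> 2" .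
    then show ?thesis by (auto simp: top_unique)
  qed
  obtain f :: "nat \<Rightarrow> ennreal" where f: "range f \<subseteq> \<phi> ` S" "Sup (\<phi> ` S) = Sup (range f)"
    using ennreal_SUP_countable_SUP[of S \<phi>] zero_S by blast
  have "\<exists>rs. \<forall>k. rs k \<in> S \<and> f k = \<phi> (rs k)" using f(1) by (intro choice) blast
  then obtain rs where rs0: "\<forall>k. rs k \<in> S \<and> f k = \<phi> (rs k)" by blast
  have rs: "\<And>k. rs k \<in> S" "\<And>k. f k = \<phi> (rs k)" using rs0 by auto
  define rst where "rst \<omega> = (SUP k. rs k \<omega>)" for \<omega>
  have rst_stop: "stopping_time_on M F rst"
    unfolding stopping_time_on_def
  proof (intro allI impI)
    fix t :: real assume t: "0 \<le> t"
    interpret sigma_algebra "space M" "F t" using F_sa[OF t] .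
    have "{\<omega>\<in>space M. rst \<omega> \<le> ennreal t} = (\<Inter>k. {\<omega>\<in>space M. rs k \<omega> \<le> ennreal t})"
      by (auto simp: rst_def SUP_le_iff)
    also have "\<dots> \<in> F t"
    proof (rule countable_INT)
      have "{\<omega>\<in>space M. rs k \<omega> \<le> ennreal t} \<in> F t" for k
        using rs(1)[of k] t unfolding S_def stopping_time_on_def by blast
      then show "range (\<lambda>k. {\<omega>\<in>space M. rs k \<omega> \<le> ennreal t}) \<subseteq> F t" by blast
    qed simp
    finally show "{\<omega>\<in>space M. rst \<omega> \<le> ennreal t} \<in> F t" .
  qed
  have rst_le: "\<forall>\<omega>\<in>space M. rst \<omega> \<le> \<tau> \<omega>" using rs(1) unfolding rst_def S_def by (blast intro: SUP_least)
  have rst_S: "rst \<in> S" using rst_stop rst_le by (simp add: S_def)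
  have phi_rst: "\<phi> rst = Sup (\<phi> ` S)"
  proof (rule antisym)
    show "\<phi> rst \<le> Sup (\<phi> ` S)" using rst_S by (rule SUP_upper)
    have le: "\<phi> (rs k) \<le> \<phi> rst" for k unfolding \<phi>_def rst_def
      by (intro nn_integral_mono Gf_mono SUP_upper) simp
    show "Sup (\<phi> ` S) \<le> \<phi> rst" unfolding f(2)
    proof (rule SUP_least)
      fix k show "f k \<le> \<phi> rst" using le[of k] rs(2)[of k] by simp
    qed
  qed
  have null: "{\<omega>\<in>space M. rst \<omega> < \<rho> \<omega>} \<in> null_sets M"
    if rS: "\<rho> \<in> S" and ge: "\<forall>\<omega>\<in>space M. rst \<omega> \<le> \<rho> \<omega>" for \<rho>
  proof (rule ccontr)
    assume nn: "{\<omega> \<in> space M. rst \<omega> < \<rho> \<omega>} \<notin> null_sets M"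
    have rstop: "stopping_time_on M F \<rho>" using rS by (simp add: S_def)
    have setm: "{\<omega> \<in> space M. rst \<omega> < \<rho> \<omega>} \<in> sets M"
      using stop_meas[OF rst_stop] stop_meas[OF rstop] by (rule borel_measurable_less)
    have "\<phi> rst < \<phi> \<rho>" unfolding \<phi>_def
    proof (rule nn_integral_less)
      show "(\<lambda>\<omega>. Gf (rst \<omega>)) \<in> borel_measurable M" by (rule meas[OF rst_stop])
      show "(\<lambda>\<omega>. Gf (\<rho> \<omega>)) \<in> borel_measurable M" by (rule meas[OF rstop])
      show "(\<integral>\<^sup>+\<omega>. Gf (rst \<omega>) \<partial>M) \<noteq> \<infinity>" using phi_fin[of rst] by (simp add: \<phi>_def)
      show "AE x in M. Gf (rst x) \<le> Gf (\<rho> x)" using ge by (intro AE_I2) (simp add: Gf_mono)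
      show "\<not> (AE x in M. Gf (\<rho> x) \<le> Gf (rst x))"
      proof
        assume ae: "AE x in M. Gf (\<rho> x) \<le> Gf (rst x)"
        have imp: "x \<notin> {\<omega> \<in> space M. rst \<omega> < \<rho> \<omega>}" if le: "Gf (\<rho> x) \<le> Gf (rst x)" for x
        proof
          assume "x \<in> {\<omega> \<in> space M. rst \<omega> < \<rho> \<omega>}"
          then have "rst x < \<rho> x" by simp
          then have "Gf (rst x) < Gf (\<rho> x)" by (rule Gf_strict)
          with le show False by simp
        qed
        have "AE x in M. x \<notin> {\<omega> \<in> space M. rst \<omega> < \<rho> \<omega>}"
          using ae by (rule eventually_mono) (rule imp)
        then show False using nn AE_iff_null_sets[OF setm] by simp
      qed
    qed
    moreover have "\<phi> \<rho> \<le> Sup (\<phi> ` S)" using rS by (rule SUP_upper)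
    then have "\<phi> \<rho> \<le> \<phi> rst" using phi_rst by simp
    ultimately show False by simp
  qed
  define N where "N = (\<Union>n. {\<omega>\<in>space M. rst \<omega> < nxt rst n \<omega>})"
  have nxtS: "nxt rst n \<in> S" for n
    using nxt_stop[OF rst_stop] nxt_le_tau rst_le by (auto simp: S_def)
  have N_null: "N \<in> null_sets M" unfolding N_def
    using null[OF nxtS] nxt_ge by (intro null_sets_UN) auto
  have eqt: "rst \<omega> = \<tau> \<omega>" if w: "\<omega> \<in> space M" and nN: "\<omega> \<notin> N" for \<omega>
  proof (rule ccontr)
    assume "rst \<omega> \<noteq> \<tau> \<omega>"
    moreover have "rst \<omega> \<le> \<tau> \<omega>" using rst_le w by blast
    ultimately have "rst \<omega> < \<tau> \<omega>" by (intro le_neq_trans) auto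
    then obtain n where "rst \<omega> < nxt rst n \<omega>" using nxt_gt[OF w] by blast
    then show False using nN w by (auto simp: N_def)
  qed
  show ?thesis unfolding stopping_time_on_def
  proof (intro allI impI)
    fix t :: real assume t: "0 \<le> t"
    interpret sigma_algebra "space M" "F t" using F_sa[OF t] .
    have eqs: "{\<omega>\<in>space M. \<tau> \<omega> \<le> ennreal t} =
        ({\<omega>\<in>space M. rst \<omega> \<le> ennreal t} - N) \<union> ({\<omega>\<in>space M. \<tau> \<omega> \<le> ennreal t} \<inter> N)"
    proof (intro equalityI subsetI)
      fix \<omega> assume "\<omega> \<in> {\<omega>\<in>space M. \<tau> \<omega> \<le> ennreal t}"
      then show "\<omega> \<in> ({\<omega>\<in>space M. rst \<omega> \<le> ennreal t} - N) \<union> ({\<omega>\<in>space M. \<tau> \<omega> \<le> ennreal t} \<inter> N)"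
        using eqt[of \<omega>] by (cases "\<omega> \<in> N") simp_all
    next
      fix \<omega> assume "\<omega> \<in> ({\<omega>\<in>space M. rst \<omega> \<le> ennreal t} - N) \<union> ({\<omega>\<in>space M. \<tau> \<omega> \<le> ennreal t} \<inter> N)"
      then show "\<omega> \<in> {\<omega>\<in>space M. \<tau> \<omega> \<le> ennreal t}"
        using eqt[of \<omega>] by (cases "\<omega> \<in> N") simp_all
    qed
    have m1: "{\<omega>\<in>space M. rst \<omega> \<le> ennreal t} \<in> F t" using rst_stop t by (simp add: stopping_time_on_def)
    have m2: "N \<in> F t" using F_compl[OF N_null _ t] by simp
    have m3: "{\<omega>\<in>space M. \<tau> \<omega> \<le> ennreal t} \<inter> N \<in> F t" using F_compl[OF N_null _ t] by simp
    have "({\<omega>\<in>space M. rst \<omega> \<le> ennreal t} - N) \<union> ({\<omega>\<in>space M. \<tau> \<omega> \<le> ennreal t} \<inter> N) \<in> F t"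
      using m1 m2 m3 by (intro Un Diff)
    then show "{\<omega>\<in>space M. \<tau> \<omega> \<le> ennreal t} \<in> F t" using eqs by simp
  qed
qed

end

context hitset
begin

lemma tauG_stop:
  assumes tauG_def: "\<tau>G = (\<lambda>\<omega>. if \<tau> \<omega> < \<infinity> \<and> left_lim Y (enn2real (\<tau> \<omega>)) \<omega> < 0 then \<tau> \<omega> else \<infinity>)"
  shows "stopping_time_on M F \<tau>G"
  unfolding stopping_time_on_def
proof (intro allI impI)
  fix t :: real assume t: "0 \<le> t"
  interpret sigma_algebra "space M" "F t" using F_sa[OF t] .
  define Q where "Q a = {q\<in>\<rat>. a \<le> q \<and> q < t}" for a
  define A where "A \<delta> a = ({\<omega>\<in>space M. \<tau> \<omega> \<le> ennreal t} - {\<omega>\<in>space M. \<tau> \<omega> \<le> ennreal a}) \<inter>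
        (\<Inter>q\<in>Q a. {\<omega>\<in>space M. \<tau> \<omega> \<le> ennreal q} \<union> {\<omega>\<in>space M. Y q \<omega> \<le> - \<delta>})" for \<delta> a
  have eq: "{\<omega>\<in>space M. \<tau>G \<omega> \<le> ennreal t} = (\<Union>\<delta>\<in>{\<delta>\<in>\<rat>. 0 < \<delta>}. \<Union>a\<in>{a\<in>\<rat>. 0 \<le> a \<and> a < t}. A \<delta> a)"
  proof (intro equalityI subsetI)
    fix \<omega> assume "\<omega> \<in> {\<omega>\<in>space M. \<tau>G \<omega> \<le> ennreal t}"
    then have w: "\<omega> \<in> space M" and le: "\<tau>G \<omega> \<le> ennreal t" by auto
    have c: "\<tau> \<omega> < \<infinity> \<and> left_lim Y (enn2real (\<tau> \<omega>)) \<omega> < 0"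
    proof (rule ccontr)
      assume nc: "\<not> (\<tau> \<omega> < \<infinity> \<and> left_lim Y (enn2real (\<tau> \<omega>)) \<omega> < 0)"
      have "\<tau>G \<omega> = (if \<tau> \<omega> < \<infinity> \<and> left_lim Y (enn2real (\<tau> \<omega>)) \<omega> < 0 then \<tau> \<omega> else \<infinity>)"
        by (simp only: tauG_def)
      then have "\<tau>G \<omega> = \<infinity>" by (simp only: if_not_P[OF nc])
      then show False using le by (simp add: top_unique)
    qed
    then have tg: "\<tau>G \<omega> = \<tau> \<omega>" by (simp add: tauG_def)
    define r where "r = enn2real (\<tau> \<omega>)"
    have rr: "\<tau> \<omega> = ennreal r" using c by (simp add: r_def)
    have r0: "0 < r" using tau_hit[OF w] c by (simp add: r_def)
    have rt: "r \<le> t" using le tg rr t by simp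
    define l where "l = left_lim Y r \<omega>"
    have l0: "l < 0" using c by (simp add: l_def r_def)
    have lim: "((\<lambda>s. Y s \<omega>) \<longlongrightarrow> l) (at_left r)" using Y_ll[OF w r0] unfolding l_def by (rule conjunct1)
    obtain \<delta> where d: "\<delta> \<in> \<rat>" "0 < \<delta>" "\<delta> < - l / 2" using Rats_dense_in_real[of 0 "- l / 2"] l0 by auto
    have "l < l / 2" using l0 by simp
    then have "eventually (\<lambda>s. Y s \<omega> < l / 2) (at_left r)" using order_tendstoD(2)[OF lim] by blast
    then obtain c where cr: "c < r" and cY: "\<And>y. y > c \<Longrightarrow> y < r \<Longrightarrow> Y y \<omega> < l / 2"
      by (auto simp: eventually_at_left_field)
    have "max c 0 < r" using cr r0 by simp
    then obtain a where a: "a \<in> \<rat>" "max c 0 < a" "a < r" using Rats_dense_in_real by blast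
    have a0: "0 \<le> a" using a by simp
    have "\<omega> \<in> A \<delta> a" unfolding A_def
    proof (intro IntI DiffI)
      show "\<omega> \<in> {\<omega>\<in>space M. \<tau> \<omega> \<le> ennreal t}" using w le tg by simp
      show "\<omega> \<notin> {\<omega>\<in>space M. \<tau> \<omega> \<le> ennreal a}" using rr a0 a(3) by simp
      show "\<omega> \<in> (\<Inter>q\<in>Q a. {\<omega>\<in>space M. \<tau> \<omega> \<le> ennreal q} \<union> {\<omega>\<in>space M. Y q \<omega> \<le> - \<delta>})"
      proof
        fix q assume q: "q \<in> Q a"
        show "\<omega> \<in> {\<omega>\<in>space M. \<tau> \<omega> \<le> ennreal q} \<union> {\<omega>\<in>space M. Y q \<omega> \<le> - \<delta>}"
        proof (cases "\<tau> \<omega> \<le> ennreal q")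
          case True then show ?thesis using w by simp
        next
          case False
          have q0: "0 \<le> q" using q a0 by (simp add: Q_def)
          have "q < r" using False rr q0 by simp
          moreover have "c < q" using q a(2) by (simp add: Q_def)
          ultimately have "Y q \<omega> < l / 2" using cY by blast
          then have "Y q \<omega> \<le> - \<delta>" using d by simp
          then show ?thesis using w by simp
        qed
      qed
    qed
    moreover have "\<delta> \<in> {\<delta>\<in>\<rat>. 0 < \<delta>}" using d by simp
    moreover have "a \<in> {a\<in>\<rat>. 0 \<le> a \<and> a < t}" using a a0 rt by simp
    ultimately show "\<omega> \<in> (\<Union>\<delta>\<in>{\<delta>\<in>\<rat>. 0 < \<delta>}. \<Union>a\<in>{a\<in>\<rat>. 0 \<le> a \<and> a < t}. A \<delta> a)" by blast
  next
    fix \<omega> assume "\<omega> \<in> (\<Union>\<delta>\<in>{\<delta>\<in>\<rat>. 0 < \<delta>}. \<Union>a\<in>{a\<in>\<rat>. 0 \<le> a \<and> a < t}. A \<delta> a)"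
    then obtain \<delta> a where d: "\<delta> \<in> \<rat>" "0 < \<delta>" and a: "a \<in> \<rat>" "0 \<le> a" "a < t" and wA: "\<omega> \<in> A \<delta> a"
      by blast
    have wA': "\<omega> \<in> ({\<omega>\<in>space M. \<tau> \<omega> \<le> ennreal t} - {\<omega>\<in>space M. \<tau> \<omega> \<le> ennreal a}) \<inter>
        (\<Inter>q\<in>Q a. {\<omega>\<in>space M. \<tau> \<omega> \<le> ennreal q} \<union> {\<omega>\<in>space M. Y q \<omega> \<le> - \<delta>})"
      using wA by (simp only: A_def)
    have w1: "\<omega> \<in> {\<omega>\<in>space M. \<tau> \<omega> \<le> ennreal t} - {\<omega>\<in>space M. \<tau> \<omega> \<le> ennreal a}"
      using IntD1[OF wA'] .
    then have w: "\<omega> \<in> space M" and tt: "\<tau> \<omega> \<le> ennreal t" and ta: "\<not> \<tau> \<omega> \<le> ennreal a"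
      by simp_all
    have H: "\<tau> \<omega> \<le> ennreal q \<or> Y q \<omega> \<le> - \<delta>" if qQ: "q \<in> Q a" for q
    proof -
      have "\<omega> \<in> {\<omega>\<in>space M. \<tau> \<omega> \<le> ennreal q} \<union> {\<omega>\<in>space M. Y q \<omega> \<le> - \<delta>}"
        using INT_D[OF IntD2[OF wA'] qQ] .
      then show ?thesis by blast
    qed
    have fin: "\<tau> \<omega> < \<infinity>" using tt by (simp add: le_less_trans)
    define r where "r = enn2real (\<tau> \<omega>)"
    have rr: "\<tau> \<omega> = ennreal r" using fin by (simp add: r_def)
    have ar: "a < r" using ta rr a(2) by simp
    have r0: "0 < r" using ar a(2) by simp
    have rt: "r \<le> t" using tt rr t by simp
    define l where "l = left_lim Y r \<omega>"
    have lim: "((\<lambda>s. Y s \<omega>) \<longlongrightarrow> l) (at_left r)" using Y_ll[OF w r0] unfolding l_def by (rule conjunct1)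
    have "l \<le> - \<delta>"
    proof (rule ccontr)
      assume "\<not> l \<le> - \<delta>"
      then have "- \<delta> < l" by simp
      then have "eventually (\<lambda>s. - \<delta> < Y s \<omega>) (at_left r)" using order_tendstoD(1)[OF lim] by blast
      then obtain c where cr: "c < r" and cY: "\<And>y. y > c \<Longrightarrow> y < r \<Longrightarrow> - \<delta> < Y y \<omega>"
        by (auto simp: eventually_at_left_field)
      have "max c a < r" using cr ar by simp
      then obtain q where q: "q \<in> \<rat>" "max c a < q" "q < r" using Rats_dense_in_real by blast
      have qQ: "q \<in> Q a" using q rt by (simp add: Q_def)
      have q0: "0 \<le> q" using q a(2) by simp
      have "\<not> \<tau> \<omega> \<le> ennreal q" using rr q(3) q0 by simp
      moreover have "- \<delta> < Y q \<omega>" using cY q by simp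
      ultimately show False using H[OF qQ] by simp
    qed
    then have "left_lim Y (enn2real (\<tau> \<omega>)) \<omega> < 0" using d by (simp add: l_def r_def)
    then have "\<tau>G \<omega> = \<tau> \<omega>" using fin by (simp add: tauG_def)
    then show "\<omega> \<in> {\<omega>\<in>space M. \<tau>G \<omega> \<le> ennreal t}" using w tt by simp
  qed
  have Am: "A \<delta> a \<in> F t" if "\<delta> \<in> {\<delta>\<in>\<rat>. 0 < \<delta>}" "a \<in> {a\<in>\<rat>. 0 \<le> a \<and> a < t}" for \<delta> a :: real
  proof -
    have a: "a \<in> \<rat>" "0 \<le> a" "a < t" using that by auto
    have s1: "{\<omega>\<in>space M. \<tau> \<omega> \<le> ennreal t} \<in> F t" using tau_stop t by (simp add: stopping_time_on_def)
    have "{\<omega>\<in>space M. \<tau> \<omega> \<le> ennreal a} \<in> F a" using tau_stop a by (simp add: stopping_time_on_def)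
    then have s2: "{\<omega>\<in>space M. \<tau> \<omega> \<le> ennreal a} \<in> F t" using F_mono[of a t] a by auto
    have s3: "(\<Inter>q\<in>Q a. {\<omega>\<in>space M. \<tau> \<omega> \<le> ennreal q} \<union> {\<omega>\<in>space M. Y q \<omega> \<le> - \<delta>}) \<in> F t"
    proof (rule countable_INT')
      show "countable (Q a)" unfolding Q_def by (intro countable_Collect countable_rat)
      show "Q a \<noteq> {}" using a by (auto simp: Q_def)
      show "(\<lambda>q. {\<omega>\<in>space M. \<tau> \<omega> \<le> ennreal q} \<union> {\<omega>\<in>space M. Y q \<omega> \<le> - \<delta>}) ` Q a \<subseteq> F t"
      proof
        fix B assume "B \<in> (\<lambda>q. {\<omega>\<in>space M. \<tau> \<omega> \<le> ennreal q} \<union> {\<omega>\<in>space M. Y q \<omega> \<le> - \<delta>}) ` Q a"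
        then obtain q where q: "q \<in> Q a" and B: "B = {\<omega>\<in>space M. \<tau> \<omega> \<le> ennreal q} \<union> {\<omega>\<in>space M. Y q \<omega> \<le> - \<delta>}"
          by blast
        have q0: "0 \<le> q" "q \<le> t" using q a by (auto simp: Q_def)
        have "{\<omega>\<in>space M. \<tau> \<omega> \<le> ennreal q} \<in> F q" using tau_stop q0 by (simp add: stopping_time_on_def)
        moreover have "{\<omega>\<in>space M. Y q \<omega> \<le> - \<delta>} \<in> F q" using Y_le q0 by simp
        moreover have "F q \<subseteq> F t" using F_mono q0 by simp
        ultimately have "{\<omega>\<in>space M. \<tau> \<omega> \<le> ennreal q} \<in> F t" "{\<omega>\<in>space M. Y q \<omega> \<le> - \<delta>} \<in> F t"
          by (blast dest: subsetD)+
        then show "B \<in> F t" unfolding B by (rule Un)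
      qed
    qed
    show ?thesis unfolding A_def using s1 s2 s3 by (intro Int Diff)
  qed
  have "(\<Union>\<delta>\<in>{\<delta>\<in>\<rat>. 0 < \<delta>}. \<Union>a\<in>{a\<in>\<rat>. 0 \<le> a \<and> a < t}. A \<delta> a) \<in> F t"
  proof (rule countable_UN'')
    show "countable {\<delta>\<in>\<rat>. 0 < \<delta>}" by (intro countable_Collect countable_rat)
    fix \<delta> :: real assume d: "\<delta> \<in> {\<delta>\<in>\<rat>. 0 < \<delta>}"
    show "(\<Union>a\<in>{a\<in>\<rat>. 0 \<le> a \<and> a < t}. A \<delta> a) \<in> F t"
    proof (rule countable_UN'')
      show "countable {a\<in>\<rat>. 0 \<le> a \<and> a < t}" by (intro countable_Collect countable_rat)
      fix a assume "a \<in> {a\<in>\<rat>. 0 \<le> a \<and> a < (t::real)}"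
      then show "A \<delta> a \<in> F t" by (rule Am[OF d])
    qed
  qed
  then show "{\<omega>\<in>space M. \<tau>G \<omega> \<le> ennreal t} \<in> F t" using eq by simp
qed

lemma TI:
  assumes tauG_def: "\<tau>G = (\<lambda>\<omega>. if \<tau> \<omega> < \<infinity> \<and> left_lim Y (enn2real (\<tau> \<omega>)) \<omega> < 0 then \<tau> \<omega> else \<infinity>)"
    and H: "\<forall>\<sigma>. predictable_time M F \<sigma> \<longrightarrow>
            {\<omega>\<in>space M. \<sigma> \<omega> < \<infinity> \<and>
               left_lim X (enn2real (\<sigma> \<omega>)) \<omega> < b (enn2real (\<sigma> \<omega>)) \<and>
               b (enn2real (\<sigma> \<omega>)) \<le> X (enn2real (\<sigma> \<omega>)) \<omega>} \<in> null_sets M"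
  shows "totally_inaccessible M F \<tau>G"
  unfolding totally_inaccessible_def
proof (intro conjI allI impI)
  show "stopping_time_on M F \<tau>G" by (rule tauG_stop[OF tauG_def])
  fix \<sigma> assume "predictable_time M F \<sigma>"
  then have N: "{\<omega>\<in>space M. \<sigma> \<omega> < \<infinity> \<and>
               left_lim X (enn2real (\<sigma> \<omega>)) \<omega> < b (enn2real (\<sigma> \<omega>)) \<and>
               b (enn2real (\<sigma> \<omega>)) \<le> X (enn2real (\<sigma> \<omega>)) \<omega>} \<in> null_sets M" using H by blast
  have sub: "{\<omega>\<in>space M. \<tau>G \<omega> = \<sigma> \<omega> \<and> \<sigma> \<omega> < \<infinity>} \<subseteq> {\<omega>\<in>space M. \<sigma> \<omega> < \<infinity> \<and>
               left_lim X (enn2real (\<sigma> \<omega>)) \<omega> < b (enn2real (\<sigma> \<omega>)) \<and>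
               b (enn2real (\<sigma> \<omega>)) \<le> X (enn2real (\<sigma> \<omega>)) \<omega>}"
  proof
    fix \<omega> assume "\<omega> \<in> {\<omega>\<in>space M. \<tau>G \<omega> = \<sigma> \<omega> \<and> \<sigma> \<omega> < \<infinity>}"
    then have w: "\<omega> \<in> space M" and e: "\<tau>G \<omega> = \<sigma> \<omega>" and sf: "\<sigma> \<omega> < \<infinity>" by auto
    have c: "\<tau> \<omega> < \<infinity> \<and> left_lim Y (enn2real (\<tau> \<omega>)) \<omega> < 0"
    proof (rule ccontr)
      assume nc: "\<not> (\<tau> \<omega> < \<infinity> \<and> left_lim Y (enn2real (\<tau> \<omega>)) \<omega> < 0)"
      have "\<tau>G \<omega> = (if \<tau> \<omega> < \<infinity> \<and> left_lim Y (enn2real (\<tau> \<omega>)) \<omega> < 0 then \<tau> \<omega> else \<infinity>)"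
        by (simp only: tauG_def)
      then have "\<tau>G \<omega> = \<infinity>" by (simp only: if_not_P[OF nc])
      then show False using e sf by simp
    qed
    then have st: "\<sigma> \<omega> = \<tau> \<omega>" using e by (simp add: tauG_def)
    define r where "r = enn2real (\<tau> \<omega>)"
    have h: "0 \<le> Y r \<omega>" "0 < r" using tau_hit[OF w] c by (simp_all add: r_def)
    have ll: "left_lim Y r \<omega> = left_lim X r \<omega> - b r" using Y_ll[OF w h(2)] by simp
    have "left_lim Y r \<omega> < 0" using c by (simp add: r_def)
    then have "left_lim X r \<omega> < b r" using ll by simp
    moreover have "b r \<le> X r \<omega>" using h(1) by (simp add: Y_def)
    ultimately show "\<omega> \<in> {\<omega>\<in>space M. \<sigma> \<omega> < \<infinity> \<and>
               left_lim X (enn2real (\<sigma> \<omega>)) \<omega> < b (enn2real (\<sigma> \<omega>)) \<and>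
               b (enn2real (\<sigma> \<omega>)) \<le> X (enn2real (\<sigma> \<omega>)) \<omega>}"
      using w sf st by (simp add: r_def)
  qed
  have "{\<omega>\<in>space M. \<tau>G \<omega> = \<sigma> \<omega> \<and> \<sigma> \<omega> < \<infinity>} \<in> F 0" using F_compl[OF N sub] by simp
  then have "{\<omega>\<in>space M. \<tau>G \<omega> = \<sigma> \<omega> \<and> \<sigma> \<omega> < \<infinity>} \<in> sets M" using F_sub[of 0] by blast
  then show "{\<omega>\<in>space M. \<tau>G \<omega> = \<sigma> \<omega> \<and> \<sigma> \<omega> < \<infinity>} \<in> null_sets M"
    using null_sets_subset[OF N _ sub] by blast
qed

end

theorem corollary2p18:
  fixes M :: "'a measure" and F :: "real \<Rightarrow> 'a set set"
    and X :: "real \<Rightarrow> 'a \<Rightarrow> real" and b :: "real \<Rightarrow> real"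
    and Y :: "real \<Rightarrow> 'a \<Rightarrow> real" and \<tau> \<tau>G :: "'a \<Rightarrow> ennreal"
  assumes "prob_space M"
    and "usual_conditions M F"
    and "cadlag_paths M X" and "adapted M F X"
    and "continuous_on {0..} b"
    and "\<forall>\<omega>\<in>space M. X 0 \<omega> < b 0"
    and Y_def: "Y = (\<lambda>t \<omega>. X t \<omega> - b t)"
    and tau_def: "\<tau> = hitting_time Y"
    and tauG_def: "\<tau>G = (\<lambda>\<omega>. if \<tau> \<omega> < \<infinity> \<and> left_lim Y (enn2real (\<tau> \<omega>)) \<omega> < 0
                              then \<tau> \<omega> else \<infinity>)"
  shows "((\<forall>\<sigma>. predictable_time M F \<sigma> \<longrightarrow>
            {\<omega>\<in>space M. \<sigma> \<omega> < \<infinity> \<and>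
               left_lim X (enn2real (\<sigma> \<omega>)) \<omega> < b (enn2real (\<sigma> \<omega>)) \<and>
               b (enn2real (\<sigma> \<omega>)) \<le> X (enn2real (\<sigma> \<omega>)) \<omega>} \<in> null_sets M)
          \<longrightarrow> totally_inaccessible M F \<tau>G)
       \<and> ((\<forall>\<sigma>. predictable_time M F \<sigma> \<longrightarrow>
            {\<omega>\<in>space M. \<sigma> \<omega> < \<infinity> \<and>
               X (enn2real (\<sigma> \<omega>)) \<omega> - left_lim X (enn2real (\<sigma> \<omega>)) \<omega> \<noteq> 0} \<in> null_sets M)
          \<longrightarrow> totally_inaccessible M F \<tau>G)"
proof -
  interpret hitset M F X b Y \<tau>
    by (rule hitset.intro) (fact assms)+
  show ?thesis
  proof (intro conjI impI)
    assume H: "\<forall>\<sigma>. predictable_time M F \<sigma> \<longrightarrow>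
            {\<omega>\<in>space M. \<sigma> \<omega> < \<infinity> \<and>
               left_lim X (enn2real (\<sigma> \<omega>)) \<omega> < b (enn2real (\<sigma> \<omega>)) \<and>
               b (enn2real (\<sigma> \<omega>)) \<le> X (enn2real (\<sigma> \<omega>)) \<omega>} \<in> null_sets M"
    show "totally_inaccessible M F \<tau>G" by (rule TI[OF tauG_def H])
  next
    assume H2: "\<forall>\<sigma>. predictable_time M F \<sigma> \<longrightarrow>
            {\<omega>\<in>space M. \<sigma> \<omega> < \<infinity> \<and>
               X (enn2real (\<sigma> \<omega>)) \<omega> - left_lim X (enn2real (\<sigma> \<omega>)) \<omega> \<noteq> 0} \<in> null_sets M"
    have H: "\<forall>\<sigma>. predictable_time M F \<sigma> \<longrightarrow>
            {\<omega>\<in>space M. \<sigma> \<omega> < \<infinity> \<and>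
               left_lim X (enn2real (\<sigma> \<omega>)) \<omega> < b (enn2real (\<sigma> \<omega>)) \<and>
               b (enn2real (\<sigma> \<omega>)) \<le> X (enn2real (\<sigma> \<omega>)) \<omega>} \<in> null_sets M"
    proof (intro allI impI)
      fix \<sigma> assume "predictable_time M F \<sigma>"
      then have N: "{\<omega>\<in>space M. \<sigma> \<omega> < \<infinity> \<and>
               X (enn2real (\<sigma> \<omega>)) \<omega> - left_lim X (enn2real (\<sigma> \<omega>)) \<omega> \<noteq> 0} \<in> null_sets M"
        using H2 by blast
      have sub: "{\<omega>\<in>space M. \<sigma> \<omega> < \<infinity> \<and>
               left_lim X (enn2real (\<sigma> \<omega>)) \<omega> < b (enn2real (\<sigma> \<omega>)) \<and>
               b (enn2real (\<sigma> \<omega>)) \<le> X (enn2real (\<sigma> \<omega>)) \<omega>} \<subseteq> {\<omega>\<in>space M. \<sigma> \<omega> < \<infinity> \<and>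
               X (enn2real (\<sigma> \<omega>)) \<omega> - left_lim X (enn2real (\<sigma> \<omega>)) \<omega> \<noteq> 0}"
        by auto
      have "{\<omega>\<in>space M. \<sigma> \<omega> < \<infinity> \<and>
               left_lim X (enn2real (\<sigma> \<omega>)) \<omega> < b (enn2real (\<sigma> \<omega>)) \<and>
               b (enn2real (\<sigma> \<omega>)) \<le> X (enn2real (\<sigma> \<omega>)) \<omega>} \<in> F 0"
        using F_compl[OF N sub] by simp
      then have m: "{\<omega>\<in>space M. \<sigma> \<omega> < \<infinity> \<and>
               left_lim X (enn2real (\<sigma> \<omega>)) \<omega> < b (enn2real (\<sigma> \<omega>)) \<and>
               b (enn2real (\<sigma> \<omega>)) \<le> X (enn2real (\<sigma> \<omega>)) \<omega>} \<in> sets M"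
        using F_sub[of 0] by blast
      show "{\<omega>\<in>space M. \<sigma> \<omega> < \<infinity> \<and>
               left_lim X (enn2real (\<sigma> \<omega>)) \<omega> < b (enn2real (\<sigma> \<omega>)) \<and>
               b (enn2real (\<sigma> \<omega>)) \<le> X (enn2real (\<sigma> \<omega>)) \<omega>} \<in> null_sets M"
        by (rule null_sets_subset[OF N m sub])
    qed
    show "totally_inaccessible M F \<tau>G" by (rule TI[OF tauG_def H])
  qed
qed

end
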